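(* Let $\lambda_1<\dots<\lambda_N$ be real and $u_1,\dots,u_N\in(-1,1)\setminus\{0\}$ with $\sum_{i=1}^Nu_i^2=1$, and set $s_{\lambda,u}(l)=\sum_{i=1}^N\frac{u_i^2}{l-\lambda_i}$ for $l>\lambda_N$. If $1>|\alpha|\ge|u_N|$, then $$\sup_{\sigma\in\mathbb{R}^N:\,|\sigma|=1,\,\sigma\cdot u=\alpha}\sum_{i=1}^N\lambda_i\sigma_i^2=\inf_{l>\lambda_N}\left\{l-\frac{\alpha^2}{s_{\lambda,u}(l)}\right\}.$$ If $\alpha\in[-|u_N|,|u_N|]$, then $$\lambda_N-\frac{2u_N^2}{\sqrt{1-u_N^2}}(\lambda_N-\lambda_1)\le\sup_{\sigma\in\mathbb{R}^N:\,|\sigma|=1,\,\sigma\cdot u=\alpha}\sum_{i=1}^N\lambda_i\sigma_i^2\le\lambda_N.$$ *)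

theory Defs
  imports Complex_Main
begin

text \<open>Vectors in R^N are rendered as functions nat => real, indexed by {1..N}.\<close>

definition s_lu :: "nat \<Rightarrow> (nat \<Rightarrow> real) \<Rightarrow> (nat \<Rightarrow> real) \<Rightarrow> real \<Rightarrow> real" where
  "s_lu N lam u l = (\<Sum>i=1..N. (u i)^2 / (l - lam i))"

definition constr_sup :: "nat \<Rightarrow> (nat \<Rightarrow> real) \<Rightarrow> (nat \<Rightarrow> real) \<Rightarrow> real \<Rightarrow> real" where
  "constr_sup N lam u \<alpha> = Sup {(\<Sum>i=1..N. lam i * (\<sigma> i)^2) | \<sigma> :: nat \<Rightarrow> real.
       (\<Sum>i=1..N. (\<sigma> i)^2) = 1 \<and> (\<Sum>i=1..N. \<sigma> i * u i) = \<alpha>}"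

end

theory Submission
  imports Defs
begin

lemma sum_split_last:
  fixes f :: "nat \<Rightarrow> real"
  assumes "N \<ge> 1"
  shows "(\<Sum>i=1..N. f i) = (\<Sum>i=1..N-1. f i) + f N"
proof -
  have "N = Suc (N-1)" using assms by simp
  then have "(\<Sum>i=1..N. f i) = (\<Sum>i=1..Suc (N-1). f i)" by simp
  also have "\<dots> = (\<Sum>i=1..N-1. f i) + f (Suc (N-1))" by simp
  finally show ?thesis using assms by simp
qed

lemma sq_expand_aux:
  fixes d x t y :: real
  assumes "d \<noteq> 0"
  shows "d * (x - t*y/d)^2 = d*x^2 - 2*t*(x*y) + t^2*(y^2/d)"
proof -
  have "x - t*y/d = (d*x - t*y)/d" using assms by (simp add: field_simps)
  then have "d * (x - t*y/d)^2 = (d*x - t*y)^2 / d" using assms by (simp add: power2_eq_square)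
  also have "\<dots> = d*x^2 - 2*t*(x*y) + t^2*(y^2/d)" using assms
    by (simp add: power2_eq_square field_simps)
  finally show ?thesis .
qed

locale lsetup =
  fixes N :: nat and lam u :: "nat \<Rightarrow> real"
  assumes lam_mono: "\<And>i j. 1 \<le> i \<Longrightarrow> i < j \<Longrightarrow> j \<le> N \<Longrightarrow> lam i < lam j"
    and u_range: "\<And>i. 1 \<le> i \<Longrightarrow> i \<le> N \<Longrightarrow> u i \<in> {-1<..<1} - {0}"
    and u_norm: "(\<Sum>i=1..N. (u i)^2) = 1"
begin

lemma N_ge2: "N \<ge> 2"
proof (rule ccontr)
  assume "\<not> N \<ge> 2"
  then have "N = 0 \<or> N = 1" by auto
  then show False
  proof
    assume "N = 0" then show False using u_norm by simp
  next
    assume N1: "N = 1"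
    then have "(u 1)^2 = 1" using u_norm by simp
    moreover have "u 1 \<in> {-1<..<1}" using u_range[of 1] N1 by auto
    ultimately show False by (auto simp: power2_eq_1_iff)
  qed
qed

lemma lam_le: "1 \<le> i \<Longrightarrow> i \<le> N \<Longrightarrow> lam i \<le> lam N"
  using lam_mono[of i N] by (cases "i = N") auto

lemma lam1_le: "1 \<le> i \<Longrightarrow> i \<le> N \<Longrightarrow> lam 1 \<le> lam i"
  using lam_mono[of 1 i] by (cases "i = 1") auto

lemma u_sq_pos: "1 \<le> i \<Longrightarrow> i \<le> N \<Longrightarrow> (u i)^2 > 0"
  using u_range[of i] by auto

lemma u_sq_lt1: "1 \<le> i \<Longrightarrow> i \<le> N \<Longrightarrow> (u i)^2 < 1"
proof -
  assume "1 \<le> i" "i \<le> N"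
  then have "\<bar>u i\<bar> < 1" using u_range[of i] by auto
  then have "\<bar>u i\<bar>^2 < 1^2" by (intro power_strict_mono) auto
  then show ?thesis by simp
qed

lemma val_le:
  assumes "(\<Sum>i=1..N. (\<sigma> i)^2) = 1"
  shows "(\<Sum>i=1..N. lam i * (\<sigma> i)^2) \<le> lam N"
proof -
  have "(\<Sum>i=1..N. lam i * (\<sigma> i)^2) \<le> (\<Sum>i=1..N. lam N * (\<sigma> i)^2)"
    by (rule sum_mono) (auto intro!: mult_right_mono lam_le)
  also have "\<dots> = lam N" using assms by (simp add: sum_distrib_left[symmetric])
  finally show ?thesis .
qed

lemma s_pos: "l > lam N \<Longrightarrow> s_lu N lam u l > 0"
proof -
  assume l: "l > lam N"
  have "\<And>i. i \<in> {1..N} \<Longrightarrow> (u i)^2 / (l - lam i) > 0"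
  proof -
    fix i assume i: "i \<in> {1..N}"
    then have "lam i \<le> lam N" using lam_le by auto
    then have "l - lam i > 0" using l by linarith
    then show "(u i)^2 / (l - lam i) > 0" using u_sq_pos i by auto
  qed
  then show ?thesis unfolding s_lu_def using N_ge2 by (intro sum_pos) auto
qed

lemma cs_bound:
  assumes l: "l > lam N" and h1: "(\<Sum>i=1..N. (\<sigma> i)^2) = 1"
    and h2: "(\<Sum>i=1..N. \<sigma> i * u i) = \<alpha>"
  shows "(\<Sum>i=1..N. lam i * (\<sigma> i)^2) \<le> l - \<alpha>^2 / s_lu N lam u l"
proof -
  define s where "s = s_lu N lam u l"
  have sp: "s > 0" using s_pos l s_def by simp
  define t where "t = \<alpha> / s"
  define Q where "Q = (\<Sum>i=1..N. (l - lam i) * (\<sigma> i)^2)"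
  have dpos: "\<And>i. i \<in> {1..N} \<Longrightarrow> l - lam i > 0" using lam_le l by force
  have "0 \<le> (\<Sum>i=1..N. (l - lam i) * (\<sigma> i - t * u i / (l - lam i))^2)"
    using dpos by (intro sum_nonneg) (meson less_imp_le mult_nonneg_nonneg zero_le_power2)
  also have "\<dots> = (\<Sum>i=1..N. (l - lam i) * (\<sigma> i)^2 - 2 * t * (\<sigma> i * u i) + t^2 * ((u i)^2 / (l - lam i)))"
  proof (rule sum.cong[OF refl])
    fix i assume "i \<in> {1..N}"
    then have "l - lam i \<noteq> 0" using dpos by force
    then show "(l - lam i) * (\<sigma> i - t * u i / (l - lam i))^2 = (l - lam i) * (\<sigma> i)^2 - 2 * t * (\<sigma> i * u i) + t^2 * ((u i)^2 / (l - lam i))"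
      by (rule sq_expand_aux)
  qed
  also have "\<dots> = Q - 2*t*(\<Sum>i=1..N. \<sigma> i * u i) + t^2 * (\<Sum>i=1..N. (u i)^2 / (l - lam i))"
    unfolding Q_def by (simp only: sum.distrib sum_subtractf sum_distrib_left[symmetric])
  also have "\<dots> = Q - 2*t*\<alpha> + t^2 * s"
    by (simp only: h2 s_def s_lu_def)
  also have "\<dots> = Q - \<alpha>^2/s" using sp by (simp add: t_def field_simps power2_eq_square)
  finally have "\<alpha>^2/s \<le> Q" by simp
  moreover have "(\<Sum>i=1..N. lam i * (\<sigma> i)^2) = l - Q"
  proof -
    have "(\<Sum>i=1..N. lam i * (\<sigma> i)^2) = (\<Sum>i=1..N. l * (\<sigma> i)^2 - (l - lam i) * (\<sigma> i)^2)"
      by (rule sum.cong) (auto simp: algebra_simps)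
    also have "\<dots> = l - Q" unfolding Q_def by (simp only: sum_subtractf sum_distrib_left[symmetric] h1 mult_1_right)
    finally show ?thesis .
  qed
  ultimately show ?thesis by (simp add: s_def)
qed


lemma construct:
  assumes al: "\<bar>\<alpha>\<bar> \<le> \<bar>u N\<bar>"
  shows "\<exists>\<sigma>. (\<Sum>i=1..N. (\<sigma> i)^2) = 1 \<and> (\<Sum>i=1..N. \<sigma> i * u i) = \<alpha> \<and>
          lam N - (u N)^2 * (lam N - lam 1) \<le> (\<Sum>i=1..N. lam i * (\<sigma> i)^2)"
proof -
  have N2: "N \<ge> 2" by (rule N_ge2)
  define c where "c = u N"
  have c2: "c^2 < 1" "c^2 > 0" unfolding c_def using u_sq_lt1 u_sq_pos N2 by auto
  define r where "r = sqrt (1 - c^2)"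
  have rpos: "r > 0" using c2 by (simp add: r_def)
  have r2: "r^2 = 1 - c^2" using c2 by (simp add: r_def)
  have rest: "(\<Sum>i=1..N-1. (u i)^2) = r^2"
    using u_norm sum_split_last[of N "\<lambda>i. (u i)^2"] N2 r2 c_def by simp
  have al2: "\<alpha>^2 \<le> c^2" using al by (simp add: c_def abs_le_square_iff)
  define sa where "sa = sqrt (1 - \<alpha>^2)"
  have al1: "\<alpha>^2 \<le> 1" using al2 c2 by linarith
  have sa2: "sa^2 = 1 - \<alpha>^2" unfolding sa_def using al1 by (intro real_sqrt_pow2) linarith
  have sa0: "sa \<ge> 0" unfolding sa_def using al1 by simp
  have sa1: "sa \<le> 1" unfolding sa_def using al1 by (simp add: real_sqrt_le_1_iff)
  define e :: real where "e = (if \<alpha>*c \<ge> 0 then 1 else -1)"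
  have e2: "e^2 = 1" by (simp add: e_def)
  have hae: "\<alpha>*c*e = \<bar>\<alpha>\<bar>*\<bar>c\<bar>" by (simp add: e_def abs_mult[symmetric])
  define a where "a = \<alpha>*c + e*sa*r"
  define b where "b = \<alpha>*r - e*sa*c"
  have "a^2 + b^2 = \<alpha>^2*(c^2+r^2) + e^2*sa^2*(r^2+c^2)"
    by (simp add: a_def b_def power2_eq_square algebra_simps)
  then have ab1: "a^2 + b^2 = 1" using r2 e2 sa2 by simp
  have abu: "a*c + b*r = \<alpha>"
  proof -
    have "a*c + b*r = \<alpha>*(c^2+r^2)" by (simp add: a_def b_def power2_eq_square algebra_simps)
    then show ?thesis using r2 by simp
  qed
  have bsq: "b^2 = (\<bar>c\<bar>*sa - \<bar>\<alpha>\<bar>*r)^2"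
  proof -
    have "b^2 = \<alpha>^2*r^2 + e^2*sa^2*c^2 - 2*(\<alpha>*c*e)*sa*r"
      by (simp add: b_def power2_eq_square algebra_simps)
    also have "\<dots> = \<alpha>^2*r^2 + sa^2*c^2 - 2*(\<bar>\<alpha>\<bar>*\<bar>c\<bar>)*sa*r" using e2 hae by simp
    also have "\<dots> = (\<bar>c\<bar>*sa - \<bar>\<alpha>\<bar>*r)^2" by (simp add: power2_eq_square algebra_simps)
    finally show ?thesis .
  qed
  have "(\<bar>\<alpha>\<bar>*r)^2 \<le> (\<bar>c\<bar>*sa)^2"
  proof -
    have "(\<bar>\<alpha>\<bar>*r)^2 = \<alpha>^2 * (1 - c^2)" using r2 by (simp add: power_mult_distrib)
    also have "\<dots> \<le> c^2 * (1 - \<alpha>^2)" using al2 by (simp add: algebra_simps)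
    also have "\<dots> = (\<bar>c\<bar>*sa)^2" using sa2 by (simp add: power_mult_distrib)
    finally show ?thesis .
  qed
  then have le1: "\<bar>\<alpha>\<bar>*r \<le> \<bar>c\<bar>*sa" by (rule power2_le_imp_le) (simp add: sa0)
  have le2: "\<bar>c\<bar>*sa \<le> \<bar>c\<bar>" by (rule mult_left_le[OF sa1]) simp
  have "0 \<le> \<bar>\<alpha>\<bar>*r" using rpos by simp
  then have "(\<bar>c\<bar>*sa - \<bar>\<alpha>\<bar>*r)^2 \<le> \<bar>c\<bar>^2" using le1 le2
    by (intro power_mono) linarith+
  then have bc: "b^2 \<le> c^2" using bsq by simp
  define \<sigma> where "\<sigma> = (\<lambda>i. if i = N then a else (b/r) * u i)"
  have sM: "\<And>f. (\<Sum>i=1..N-1. f i (\<sigma> i)) = (\<Sum>i=1..N-1. f i ((b/r) * u i))"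
    by (rule sum.cong) (auto simp: \<sigma>_def)
  have "(\<Sum>i=1..N. (\<sigma> i)^2) = (\<Sum>i=1..N-1. ((b/r) * u i)^2) + a^2"
    using sum_split_last[of N "\<lambda>i. (\<sigma> i)^2"] N2 sM[of "\<lambda>i x. x^2"] by (simp add: \<sigma>_def)
  also have "\<dots> = (b/r)^2 * r^2 + a^2"
    by (simp only: power_mult_distrib sum_distrib_left[symmetric] rest)
  also have "\<dots> = 1" using rpos ab1 by (simp add: power_divide)
  finally have P1: "(\<Sum>i=1..N. (\<sigma> i)^2) = 1" .
  have "(\<Sum>i=1..N. \<sigma> i * u i) = (\<Sum>i=1..N-1. (b/r) * u i * u i) + a * c"
    using sum_split_last[of N "\<lambda>i. \<sigma> i * u i"] N2 sM[of "\<lambda>i x. x * u i"] by (simp add: \<sigma>_def c_def)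
  also have "\<dots> = (b/r) * r^2 + a*c"
    by (simp only: mult.assoc power2_eq_square[symmetric] sum_distrib_left[symmetric] rest)
  also have "\<dots> = \<alpha>" using rpos abu by (simp add: power2_eq_square)
  finally have P2: "(\<Sum>i=1..N. \<sigma> i * u i) = \<alpha>" .
  have "(\<Sum>i=1..N. lam i * (\<sigma> i)^2) = (\<Sum>i=1..N-1. lam i * ((b/r) * u i)^2) + lam N * a^2"
    using sum_split_last[of N "\<lambda>i. lam i * (\<sigma> i)^2"] N2 sM[of "\<lambda>i x. lam i * x^2"] by (simp add: \<sigma>_def)
  also have "\<dots> \<ge> (\<Sum>i=1..N-1. lam 1 * ((b/r) * u i)^2) + lam N * a^2"
    using N2 by (intro add_right_mono sum_mono mult_right_mono lam1_le) auto
  also have "(\<Sum>i=1..N-1. lam 1 * ((b/r) * u i)^2) = lam 1 * (b/r)^2 * r^2"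
    by (simp only: power_mult_distrib sum_distrib_left[symmetric] rest mult.assoc)
  also have "lam 1 * (b/r)^2 * r^2 = lam 1 * b^2" using rpos by (simp add: power_divide)
  finally have "lam 1 * b^2 + lam N * a^2 \<le> (\<Sum>i=1..N. lam i * (\<sigma> i)^2)" .
  moreover have "lam 1 * b^2 + lam N * a^2 = lam N - b^2 * (lam N - lam 1)"
  proof -
    have h: "lam N * a^2 + lam N * b^2 = lam N" using ab1 by (metis distrib_left mult_1_right)
    have "lam N - b^2 * (lam N - lam 1) = lam N - lam N * b^2 + lam 1 * b^2" by (simp add: algebra_simps)
    then show ?thesis using h by linarith
  qed
  moreover have "b^2 * (lam N - lam 1) \<le> c^2 * (lam N - lam 1)"
    using bc lam1_le[of N] N2 by (intro mult_right_mono) auto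
  ultimately have "lam N - (u N)^2 * (lam N - lam 1) \<le> (\<Sum>i=1..N. lam i * (\<sigma> i)^2)"
    by (simp add: c_def)
  then show ?thesis using P1 P2 by blast
qed


lemma root_sigma:
  assumes l: "l > lam N"
    and root: "(s_lu N lam u l)^2 = \<alpha>^2 * (\<Sum>i=1..N. (u i)^2 / (l - lam i)^2)"
  shows "\<exists>\<sigma>. (\<Sum>i=1..N. (\<sigma> i)^2) = 1 \<and> (\<Sum>i=1..N. \<sigma> i * u i) = \<alpha> \<and>
          (\<Sum>i=1..N. lam i * (\<sigma> i)^2) = l - \<alpha>^2 / s_lu N lam u l"
proof -
  define s where "s = s_lu N lam u l"
  have sp: "s > 0" using s_pos l s_def by simp
  have dpos: "\<And>i. i \<in> {1..N} \<Longrightarrow> l - lam i > 0" using lam_le l by force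
  define \<sigma> where "\<sigma> = (\<lambda>i. (\<alpha>/s) * (u i / (l - lam i)))"
  have "(\<Sum>i=1..N. (\<sigma> i)^2) = (\<Sum>i=1..N. (\<alpha>/s)^2 * ((u i)^2 / (l - lam i)^2))"
    by (simp add: \<sigma>_def power_mult_distrib power_divide)
  also have "\<dots> = (\<alpha>/s)^2 * (\<Sum>i=1..N. (u i)^2 / (l - lam i)^2)"
    by (simp only: sum_distrib_left)
  also have "\<dots> = \<alpha>^2 * (\<Sum>i=1..N. (u i)^2 / (l - lam i)^2) / s^2"
    by (simp add: power_divide)
  also have "\<dots> = s^2 / s^2" by (simp only: root[symmetric] s_def)
  also have "\<dots> = 1" using sp by simp
  finally have P1: "(\<Sum>i=1..N. (\<sigma> i)^2) = 1" .
  have "(\<Sum>i=1..N. \<sigma> i * u i) = (\<Sum>i=1..N. (\<alpha>/s) * ((u i)^2 / (l - lam i)))"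
    by (rule sum.cong) (auto simp: \<sigma>_def power2_eq_square)
  also have "\<dots> = (\<alpha>/s) * s" by (simp only: sum_distrib_left[symmetric] s_def s_lu_def)
  also have "\<dots> = \<alpha>" using sp by simp
  finally have P2: "(\<Sum>i=1..N. \<sigma> i * u i) = \<alpha>" .
  have "(\<Sum>i=1..N. lam i * (\<sigma> i)^2) = (\<Sum>i=1..N. l * (\<sigma> i)^2 - (\<alpha>/s)^2 * ((u i)^2 / (l - lam i)))"
  proof (rule sum.cong[OF refl])
    fix i assume "i \<in> {1..N}"
    then have ne: "l - lam i \<noteq> 0" using dpos by force
    have "(l - lam i) * (\<sigma> i)^2 = (\<alpha>/s)^2 * ((u i)^2 / (l - lam i))"
      using ne by (simp add: \<sigma>_def power_mult_distrib power_divide power2_eq_square mult_ac)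
    then show "lam i * (\<sigma> i)^2 = l * (\<sigma> i)^2 - (\<alpha>/s)^2 * ((u i)^2 / (l - lam i))"
      by (simp add: algebra_simps)
  qed
  also have "\<dots> = l * 1 - (\<alpha>/s)^2 * s"
    by (simp only: sum_subtractf sum_distrib_left[symmetric] P1 s_def s_lu_def)
  also have "\<dots> = l - \<alpha>^2 / s" using sp by (simp add: power2_eq_square)
  finally have P3: "(\<Sum>i=1..N. lam i * (\<sigma> i)^2) = l - \<alpha>^2 / s_lu N lam u l" by (simp add: s_def)
  show ?thesis using P1 P2 P3 by blast
qed


lemma ivt_root:
  assumes a1: "(u N)^2 < \<alpha>^2" and a2: "\<alpha>^2 < 1"
  shows "\<exists>l>lam N. (s_lu N lam u l)^2 = \<alpha>^2 * (\<Sum>i=1..N. (u i)^2 / (l - lam i)^2)"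
proof -
  have N2: "N \<ge> 2" by (rule N_ge2)
  define c where "c = u N"
  have c2: "c^2 > 0" unfolding c_def using u_sq_pos N2 by auto
  define g where "g = (\<lambda>l. (s_lu N lam u l)^2 - \<alpha>^2 * (\<Sum>i=1..N. (u i)^2 / (l - lam i)^2))"
  define K where "K = (\<Sum>i=1..N-1. (u i)^2 / (lam N - lam i))"
  have Kpos: "K > 0" unfolding K_def
  proof (rule sum_pos)
    show "finite {1..N-1}" by simp
    show "{1..N-1} \<noteq> {}" using N2 by simp
    fix i assume i: "i \<in> {1..N-1}"
    then have "lam N - lam i > 0" using lam_mono[of i N] N2 by auto
    then show "(u i)^2 / (lam N - lam i) > 0" using u_sq_pos[of i] i by auto
  qed
  have cpos: "\<bar>c\<bar> > 0" using c2 by auto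
  have ca: "\<bar>c\<bar> < \<bar>\<alpha>\<bar>" using a1 c_def by (metis abs_le_square_iff not_le)
  define \<gamma> where "\<gamma> = \<bar>\<alpha>\<bar> / \<bar>c\<bar>"
  have g1: "\<gamma> > 1" using ca cpos by (simp add: \<gamma>_def)
  define m where "m = (1 + \<gamma>)/2"
  have m1: "m > 1" "m < \<gamma>" using g1 by (auto simp: m_def)
  have mc: "(m*\<bar>c\<bar>)^2 < \<alpha>^2"
  proof -
    have "m*\<bar>c\<bar> < \<gamma>*\<bar>c\<bar>" using m1 cpos by simp
    also have "\<gamma>*\<bar>c\<bar> = \<bar>\<alpha>\<bar>" using cpos by (simp add: \<gamma>_def)
    finally have "m*\<bar>c\<bar> < \<bar>\<alpha>\<bar>" .
    then have "(m*\<bar>c\<bar>)^2 < \<bar>\<alpha>\<bar>^2" using m1 cpos by (intro power_strict_mono) auto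
    then show ?thesis by simp
  qed
  define d where "d = (m-1)*c^2/K"
  have dpos: "d > 0" using m1 c2 Kpos by (simp add: d_def)
  define l0 where "l0 = lam N + d"
  have l0N: "l0 > lam N" using dpos by (simp add: l0_def)
  have g0: "g l0 < 0"
  proof -
    have sp: "s_lu N lam u l0 > 0" using s_pos l0N by simp
    have split_s: "s_lu N lam u l0 = (\<Sum>i=1..N-1. (u i)^2 / (l0 - lam i)) + c^2/d"
      unfolding s_lu_def using sum_split_last[of N "\<lambda>i. (u i)^2 / (l0 - lam i)"] N2
      by (simp add: c_def l0_def)
    have "(\<Sum>i=1..N-1. (u i)^2 / (l0 - lam i)) \<le> K"
      unfolding K_def
    proof (rule sum_mono)
      fix i assume i: "i \<in> {1..N-1}"
      then have "lam N - lam i > 0" using lam_mono[of i N] N2 by auto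
      then show "(u i)^2 / (l0 - lam i) \<le> (u i)^2 / (lam N - lam i)"
        using dpos by (intro divide_left_mono) (auto simp: l0_def)
    qed
    moreover have "K + c^2/d = m*c^2/d" using dpos Kpos m1 c2 by (simp add: d_def field_simps)
    ultimately have sle: "s_lu N lam u l0 \<le> m*c^2/d" using split_s by linarith
    have "(s_lu N lam u l0)^2 \<le> (m*c^2/d)^2" using sp sle by (intro power_mono) auto
    also have "(m*c^2/d)^2 = (m*\<bar>c\<bar>)^2 * (c^2/d^2)"
      by (simp add: power_mult_distrib power_divide power2_eq_square)
    also have "\<dots> < \<alpha>^2 * (c^2/d^2)" using mc dpos c2 by (intro mult_strict_right_mono) auto
    finally have A: "(s_lu N lam u l0)^2 < \<alpha>^2 * (c^2/d^2)" .
    have "c^2/d^2 \<le> (\<Sum>i=1..N. (u i)^2 / (l0 - lam i)^2)"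
    proof -
      have "(\<Sum>i=1..N. (u i)^2 / (l0 - lam i)^2) = (\<Sum>i=1..N-1. (u i)^2 / (l0 - lam i)^2) + c^2/d^2"
        using sum_split_last[of N "\<lambda>i. (u i)^2 / (l0 - lam i)^2"] N2 by (simp add: c_def l0_def)
      moreover have "(\<Sum>i=1..N-1. (u i)^2 / (l0 - lam i)^2) \<ge> 0" by (intro sum_nonneg) auto
      ultimately show ?thesis by linarith
    qed
    then have B: "\<alpha>^2 * (c^2/d^2) \<le> \<alpha>^2 * (\<Sum>i=1..N. (u i)^2 / (l0 - lam i)^2)"
      by (intro mult_left_mono) auto
    show ?thesis using A B by (simp add: g_def)
  qed
  have al1: "\<bar>\<alpha>\<bar> < 1" using a2 by (simp add: abs_square_less_1)
  have lam1N: "lam 1 < lam N" using lam_mono[of 1 N] N2 by auto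
  define l1 where "l1 = (lam N - \<bar>\<alpha>\<bar> * lam 1)/(1 - \<bar>\<alpha>\<bar>) + 1"
  have key: "l1 * (1 - \<bar>\<alpha>\<bar>) = lam N - \<bar>\<alpha>\<bar> * lam 1 + (1 - \<bar>\<alpha>\<bar>)"
    using al1 by (simp add: l1_def field_simps)
  have key2: "l1 - lam N = \<bar>\<alpha>\<bar> * (l1 - lam 1) + (1 - \<bar>\<alpha>\<bar>)"
    using key by (simp add: algebra_simps)
  have "lam N \<le> (lam N - \<bar>\<alpha>\<bar> * lam 1)/(1 - \<bar>\<alpha>\<bar>)"
  proof -
    have "\<bar>\<alpha>\<bar> * lam 1 \<le> \<bar>\<alpha>\<bar> * lam N" using lam1N by (intro mult_left_mono) auto
    then have "lam N * (1 - \<bar>\<alpha>\<bar>) \<le> lam N - \<bar>\<alpha>\<bar> * lam 1" by (simp add: algebra_simps)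
    then show ?thesis using al1 by (simp add: le_divide_eq)
  qed
  then have l1N: "l1 > lam N" by (simp add: l1_def)
  have e1: "l1 - lam 1 > 0" "l1 - lam N > 0" using l1N lam1N by auto
  have s_ge: "1/(l1 - lam 1) \<le> s_lu N lam u l1"
  proof -
    have "(\<Sum>i=1..N. (u i)^2 / (l1 - lam 1)) \<le> (\<Sum>i=1..N. (u i)^2 / (l1 - lam i))"
    proof (rule sum_mono)
      fix i assume i: "i \<in> {1..N}"
      then have "lam 1 \<le> lam i" "lam i \<le> lam N" using lam1_le lam_le by auto
      then show "(u i)^2 / (l1 - lam 1) \<le> (u i)^2 / (l1 - lam i)"
        using l1N by (intro divide_left_mono) auto
    qed
    moreover have "(\<Sum>i=1..N. (u i)^2 / (l1 - lam 1)) = 1/(l1 - lam 1)"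
      by (simp only: sum_divide_distrib[symmetric] u_norm)
    ultimately show ?thesis by (simp add: s_lu_def)
  qed
  have p_le: "(\<Sum>i=1..N. (u i)^2 / (l1 - lam i)^2) \<le> 1/(l1 - lam N)^2"
  proof -
    have "(\<Sum>i=1..N. (u i)^2 / (l1 - lam i)^2) \<le> (\<Sum>i=1..N. (u i)^2 / (l1 - lam N)^2)"
    proof (rule sum_mono)
      fix i assume i: "i \<in> {1..N}"
      then have "lam i \<le> lam N" using lam_le by auto
      then have li: "l1 - lam i > 0" using e1 by linarith
      from \<open>lam i \<le> lam N\<close> have "(l1 - lam N)^2 \<le> (l1 - lam i)^2" using e1 by (intro power_mono) auto
      moreover have "0 < (l1 - lam i)^2 * (l1 - lam N)^2" using li e1 by simp
      ultimately show "(u i)^2 / (l1 - lam i)^2 \<le> (u i)^2 / (l1 - lam N)^2"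
        by (intro divide_left_mono) auto
    qed
    moreover have "(\<Sum>i=1..N. (u i)^2 / (l1 - lam N)^2) = 1/(l1 - lam N)^2"
      by (simp only: sum_divide_distrib[symmetric] u_norm)
    ultimately show ?thesis by simp
  qed
  have "(\<bar>\<alpha>\<bar>*(l1 - lam 1))^2 < (l1 - lam N)^2"
    using key2 e1 al1 by (intro power_strict_mono) auto
  then have "\<alpha>^2 * (l1 - lam 1)^2 < (l1 - lam N)^2" by (simp add: power_mult_distrib)
  then have C: "\<alpha>^2 * (1/(l1 - lam N)^2) < (1/(l1 - lam 1))^2"
    using e1 by (simp add: field_simps)
  have "\<alpha>^2 * (\<Sum>i=1..N. (u i)^2 / (l1 - lam i)^2) \<le> \<alpha>^2 * (1/(l1 - lam N)^2)"
    using p_le by (intro mult_left_mono) auto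
  also note C
  also have "(1/(l1 - lam 1))^2 \<le> (s_lu N lam u l1)^2" using s_ge e1 by (intro power_mono) auto
  finally have g1pos: "g l1 > 0" by (simp add: g_def)
  have cont: "\<And>a b. lam N < a \<Longrightarrow> continuous_on {a..b} g"
  proof -
    fix a b assume a: "lam N < a"
    have ne: "\<And>x i. x \<in> {a..b} \<Longrightarrow> i \<in> {1..N} \<Longrightarrow> x - lam i \<noteq> 0"
      using lam_le a by fastforce
    show "continuous_on {a..b} g" unfolding g_def s_lu_def
      by (intro continuous_intros) (auto dest: ne)
  qed
  obtain x where x: "x > lam N" "g x = 0"
  proof (cases "l0 \<le> l1")
    case True
    obtain x where "l0 \<le> x" "x \<le> l1" "g x = 0"
      using IVT'[of g l0 0 l1] g0 g1pos True cont[OF l0N] by force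
    moreover from \<open>l0 \<le> x\<close> have "lam N < x" using l0N by linarith
    ultimately show ?thesis using that by blast
  next
    case False
    obtain x where "l1 \<le> x" "x \<le> l0" "g x = 0"
      using IVT2'[of g l0 0 l1] g0 g1pos False cont[OF l1N] by force
    moreover from \<open>l1 \<le> x\<close> have "lam N < x" using l1N by linarith
    ultimately show ?thesis using that by blast
  qed
  then show ?thesis by (auto simp: g_def)
qed

end

theorem lemma3p1:
  fixes N :: nat and lam u :: "nat \<Rightarrow> real" and \<alpha> :: real
  assumes lam_mono: "\<And>i j. 1 \<le> i \<Longrightarrow> i < j \<Longrightarrow> j \<le> N \<Longrightarrow> lam i < lam j"
    and u_range: "\<And>i. 1 \<le> i \<Longrightarrow> i \<le> N \<Longrightarrow> u i \<in> {-1<..<1} - {0}"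
    and u_norm: "(\<Sum>i=1..N. (u i)^2) = 1"
  shows "(\<bar>\<alpha>\<bar> < 1 \<and> \<bar>\<alpha>\<bar> \<ge> \<bar>u N\<bar> \<longrightarrow>
           constr_sup N lam u \<alpha> = Inf {l - \<alpha>^2 / s_lu N lam u l | l. l > lam N})
       \<and> (\<bar>\<alpha>\<bar> \<le> \<bar>u N\<bar> \<longrightarrow>
           lam N - 2 * (u N)^2 / sqrt (1 - (u N)^2) * (lam N - lam 1) \<le> constr_sup N lam u \<alpha>
           \<and> constr_sup N lam u \<alpha> \<le> lam N)"
proof -
  interpret L: lsetup N lam u unfolding lsetup_def using lam_mono u_range u_norm by blast
  note vl = L.val_le
  note csb = L.cs_bound
  note con = L.construct
  note rs = L.root_sigma
  note ivt = L.ivt_root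
  note N2 = L.N_ge2
  note usq = L.u_sq_pos
  note usq1 = L.u_sq_lt1
  define S where "S = {(\<Sum>i=1..N. lam i * (\<sigma> i)^2) | \<sigma> :: nat \<Rightarrow> real.
       (\<Sum>i=1..N. (\<sigma> i)^2) = 1 \<and> (\<Sum>i=1..N. \<sigma> i * u i) = \<alpha>}"
  have cs: "constr_sup N lam u \<alpha> = Sup S" unfolding constr_sup_def S_def by (rule refl)
  define T where "T = {l - \<alpha>^2 / s_lu N lam u l | l. l > lam N}"
  have bdd: "bdd_above S" unfolding bdd_above_def S_def using vl by blast
  have Sle: "\<And>x. x \<in> S \<Longrightarrow> x \<le> lam N" unfolding S_def using vl by blast
  have Tne: "T \<noteq> {}" unfolding T_def by (auto intro: exI[of _ "lam N + 1"])
  have ST: "\<And>x y. x \<in> S \<Longrightarrow> y \<in> T \<Longrightarrow> x \<le> y" unfolding S_def T_def using csb by blast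
  have part1: "\<bar>\<alpha>\<bar> < 1 \<and> \<bar>\<alpha>\<bar> \<ge> \<bar>u N\<bar> \<longrightarrow> Sup S = Inf T"
  proof
    assume A: "\<bar>\<alpha>\<bar> < 1 \<and> \<bar>\<alpha>\<bar> \<ge> \<bar>u N\<bar>"
    have c2: "(u N)^2 > 0" using usq N2 by auto
    obtain v where vS: "v \<in> S" and vT: "Inf T \<le> v"
    proof (cases "\<alpha>^2 = (u N)^2")
      case True
      define \<sigma> where "\<sigma> = (\<lambda>i::nat. if i = N then \<alpha> / u N else 0)"
      have q: "(\<alpha> / u N)^2 = 1" using True c2 by (simp add: power_divide)
      have "(\<Sum>i=1..N. (\<sigma> i)^2) = (\<Sum>i=1..N. if i = N then (\<alpha> / u N)^2 else 0)"
        by (rule sum.cong) (auto simp: \<sigma>_def)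
      also have "\<dots> = 1" using N2 q by (simp add: sum.delta')
      finally have P1: "(\<Sum>i=1..N. (\<sigma> i)^2) = 1" .
      have "(\<Sum>i=1..N. \<sigma> i * u i) = (\<Sum>i=1..N. if i = N then \<alpha> / u N * u N else 0)"
        by (rule sum.cong) (auto simp: \<sigma>_def)
      also have "\<dots> = \<alpha>" using N2 c2 by (simp add: sum.delta')
      finally have P2: "(\<Sum>i=1..N. \<sigma> i * u i) = \<alpha>" .
      have "(\<Sum>i=1..N. lam i * (\<sigma> i)^2) = (\<Sum>i=1..N. if i = N then lam N * (\<alpha> / u N)^2 else 0)"
        by (rule sum.cong) (auto simp: \<sigma>_def)
      also have "\<dots> = lam N" using N2 q by (simp add: sum.delta')
      finally have P3: "(\<Sum>i=1..N. lam i * (\<sigma> i)^2) = lam N" .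
      have lS: "lam N \<in> S" unfolding S_def mem_Collect_eq
        by (rule exI[of _ \<sigma>]) (simp only: P1 P2 P3 simp_thms)
      have bb: "bdd_below T" unfolding bdd_below_def using ST lS by blast
      have "Inf T \<le> lam N"
      proof (rule field_le_epsilon)
        fix e :: real assume e: "0 < e"
        define l where "l = lam N + e"
        have lT: "l - \<alpha>^2 / s_lu N lam u l \<in> T" unfolding T_def l_def using e by auto
        have "s_lu N lam u l > 0" using L.s_pos e by (simp add: l_def)
        then have "\<alpha>^2 / s_lu N lam u l \<ge> 0" by simp
        then have "l - \<alpha>^2 / s_lu N lam u l \<le> lam N + e" by (simp add: l_def)
        moreover have "Inf T \<le> l - \<alpha>^2 / s_lu N lam u l" using cInf_lower[OF lT bb] .
        ultimately show "Inf T \<le> lam N + e" by linarith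
      qed
      then show ?thesis using that lS by blast
    next
      case False
      have "(u N)^2 \<le> \<alpha>^2" using A by (simp add: abs_le_square_iff)
      then have a1: "(u N)^2 < \<alpha>^2" using False by linarith
      have a2: "\<alpha>^2 < 1" using A by (simp add: abs_square_less_1)
      obtain l where l: "l > lam N" and root: "(s_lu N lam u l)^2 = \<alpha>^2 * (\<Sum>i=1..N. (u i)^2 / (l - lam i)^2)"
        using ivt[OF a1 a2] by blast
      obtain \<sigma> where P1: "(\<Sum>i=1..N. (\<sigma> i)^2) = 1" and P2: "(\<Sum>i=1..N. \<sigma> i * u i) = \<alpha>"
        and P3: "(\<Sum>i=1..N. lam i * (\<sigma> i)^2) = l - \<alpha>^2 / s_lu N lam u l"
        using rs[OF l root] by blast
      have vS: "l - \<alpha>^2 / s_lu N lam u l \<in> S" unfolding S_def mem_Collect_eq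
        by (rule exI[of _ \<sigma>]) (simp only: P1 P2 P3 simp_thms)
      have vT: "l - \<alpha>^2 / s_lu N lam u l \<in> T" unfolding T_def using l by blast
      have bb: "bdd_below T" unfolding bdd_below_def using ST vS by blast
      show ?thesis using that vS cInf_lower[OF vT bb] by blast
    qed
    have Sne: "S \<noteq> {}" using vS by blast
    have "Sup S \<le> Inf T"
      by (rule cInf_greatest[OF Tne], rule cSup_least[OF Sne]) (rule ST)
    moreover have "Inf T \<le> Sup S" using vT cSup_upper[OF vS bdd] by linarith
    ultimately show "Sup S = Inf T" by linarith
  qed
  have part2: "\<bar>\<alpha>\<bar> \<le> \<bar>u N\<bar> \<longrightarrow>
           lam N - 2 * (u N)^2 / sqrt (1 - (u N)^2) * (lam N - lam 1) \<le> Sup S \<and> Sup S \<le> lam N"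
  proof
    assume A: "\<bar>\<alpha>\<bar> \<le> \<bar>u N\<bar>"
    obtain \<sigma> where P1: "(\<Sum>i=1..N. (\<sigma> i)^2) = 1" and P2: "(\<Sum>i=1..N. \<sigma> i * u i) = \<alpha>"
      and P3: "lam N - (u N)^2 * (lam N - lam 1) \<le> (\<Sum>i=1..N. lam i * (\<sigma> i)^2)"
      using con[OF A] by blast
    have vS: "(\<Sum>i=1..N. lam i * (\<sigma> i)^2) \<in> S" unfolding S_def using P1 P2 by blast
    have Sne: "S \<noteq> {}" using vS by blast
    have c2: "(u N)^2 < 1" using usq1 N2 by auto
    define r where "r = sqrt (1 - (u N)^2)"
    have r0: "r > 0" using c2 by (simp add: r_def)
    have r1: "r \<le> 1" using c2 by (simp add: r_def)
    have D: "lam N - lam 1 \<ge> 0" using lam_mono[of 1 N] N2 by auto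
    have "1 \<le> 2 / r" using r0 r1 by (simp add: le_divide_eq)
    then have "(u N)^2 * (lam N - lam 1) * 1 \<le> (u N)^2 * (lam N - lam 1) * (2 / r)"
      using D by (intro mult_left_mono) auto
    also have "\<dots> = 2 * (u N)^2 / r * (lam N - lam 1)" by simp
    finally have "lam N - 2 * (u N)^2 / r * (lam N - lam 1) \<le> lam N - (u N)^2 * (lam N - lam 1)"
      by simp
    also note P3
    also have "(\<Sum>i=1..N. lam i * (\<sigma> i)^2) \<le> Sup S" by (rule cSup_upper[OF vS bdd])
    finally have L: "lam N - 2 * (u N)^2 / sqrt (1 - (u N)^2) * (lam N - lam 1) \<le> Sup S"
      by (simp add: r_def)
    have "Sup S \<le> lam N" by (rule cSup_least[OF Sne]) (rule Sle)
    then show "lam N - 2 * (u N)^2 / sqrt (1 - (u N)^2) * (lam N - lam 1) \<le> Sup S \<and> Sup S \<le> lam N"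
      using L by blast
  qed
  show ?thesis unfolding cs using part1 part2 by (simp add: T_def)
qed

end
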